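(* In the setting described in the context, let \texttt{Orienteering} be a routine with constant-factor guarantee $1/\lambda$ ($\lambda\ge1$): for any node weights $\nu(j)\ge0$ it returns a path $\hat\rho\in\mathcal{X}(p_s,\omega)$ with $\sum_{j}\mathbb{I}_j(\hat\rho)\nu(j)\ge\frac1\lambda\sum_j\mathbb{I}_j(\rho)\nu(j)$ for all $\rho\in\mathcal{X}(p_s,\omega)$. For $\ell=1,2,\dots$, let $\hat\rho_\ell$ be the path returned by \texttt{Orienteering} with node weights $$\nu_\ell(j) = \zeta_j d_j\prod_{\iota=1}^{\ell-1}\left(1-\mathbb{E}\left[z_j(\hat{\rho}_{\iota})\right]\right).$$ Let $X^*_K=\{\rho_k^*\}_{k=1}^K$ be an optimal solution to the Team Surviving Orienteers problem with $K$ robots. Then for every $L\ge K$, with $\hat{X}_L = \{\hat{\rho}_{\ell}\}_{\ell=1}^L$, $$J(\hat{X}_L) \ge \left(1-e^{-\frac{p_sL}{\lambda K}}\right)J(X^*_K),$$ where $J(\{\rho_k\}_{k=1}^m)=\sum_{j=1}^V d_j\,\mathbb{E}\big[1-\prod_{k=1}^m(1-z_j(\rho_k))\big]$ is the weighted expected number of nodes visited by at least one robot.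
   Context: Let $\mathcal{G}=(\mathcal{V},\mathcal{E})$ be a finite simple graph with node set $\mathcal{V}=\{1,\dots,V\}$ and edge weights $\omega:\mathcal{E}\to(0,1]$ (survival probabilities). A path $\rho$ is a sequence of nodes $\rho(0),\dots,\rho(\lvert\rho\rvert)$ with $(\rho(n-1),\rho(n))\in\mathcal{E}$ for each $n$. For a path $\rho$, let $s_n(\rho)$, $n=1,\dots,\lvert\rho\rvert$, be independent Bernoulli variables with $\mathbb{P}\{s_n(\rho)=1\}=\omega((\rho(n-1),\rho(n)))$, $a_n(\rho)=\prod_{i=1}^n s_i(\rho)$, and $z_j(\rho)=\max_{n=1,\dots,\lvert\rho\rvert} a_n(\rho)\,\mathbb{I}\{\rho(n)=j\}$; random variables for distinct paths are independent. Let $\mathbb{I}_j(\rho)=1$ if $\rho(n)=j$ for some $n\in\{1,\dots,\lvert\rho\rvert\}$, else $0$. Given start node $v_s$, terminal node $v_t$ and $p_s\in(0,1]$, $\mathcal{X}(p_s,\omega)$ is the (assumed nonempty) set of paths $\rho$ with $\rho(0)=v_s$, $\rho(\lvert\rho\rvert)=v_t$ and $\mathbb{P}\{a_{\lvert\rho\rvert}(\rho)=1\}\ge p_s$ (equivalently, an orienteering feasibility constraint on the graph with edge weights $-\log\omega(e)$ and budget $-\log p_s$). Node priorities $d_j>0$ are given. The Team Surviving Orienteers problem with $K$ robots is to choose $\rho_1,\dots,\rho_K\in\mathcal{X}(p_s,\omega)$ maximizing $J(\{\rho_k\}_{k=1}^K)$. Define $\zeta_j=\max_{\rho\in\mathcal{X}(p_s,\omega)}\mathbb{E}[z_j(\rho)]$.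 *)

theory Defs
  imports "HOL-Probability.Probability"
begin

(* Graph: nodes {1..V}, edge set E of ordered pairs (symmetric, irreflexive),
   edge survival probabilities w (a,b). A path is a node list rho of length |rho|+1. *)

definition simple_graph :: "nat \<Rightarrow> (nat \<times> nat) set \<Rightarrow> bool" where
  "simple_graph V E \<longleftrightarrow> E \<subseteq> {1..V} \<times> {1..V} \<and> (\<forall>a b. (a,b) \<in> E \<longrightarrow> (b,a) \<in> E) \<and> (\<forall>a. (a,a) \<notin> E)"

definition plen :: "nat list \<Rightarrow> nat" where
  "plen rho = length rho - 1"

definition is_path :: "(nat \<times> nat) set \<Rightarrow> nat list \<Rightarrow> bool" where
  "is_path E rho \<longleftrightarrow> rho \<noteq> [] \<and> (\<forall>n\<in>{1..plen rho}. (rho ! (n-1), rho ! n) \<in> E)"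

definition path_edges :: "nat list \<Rightarrow> (nat \<times> nat) list" where
  "path_edges rho = zip rho (tl rho)"

fun bern_seq :: "real list \<Rightarrow> bool list pmf" where
  "bern_seq [] = return_pmf []"
| "bern_seq (p # ps) = bernoulli_pmf p \<bind> (\<lambda>b. bern_seq ps \<bind> (\<lambda>bs. return_pmf (b # bs)))"

definition surv_pmf :: "(nat \<times> nat \<Rightarrow> real) \<Rightarrow> nat list \<Rightarrow> bool list pmf" where
  "surv_pmf w rho = bern_seq (map w (path_edges rho))"

(* a_n = prod_{i=1}^n s_i ; s is the outcome list, s ! (i-1) = s_i *)
definition alive :: "bool list \<Rightarrow> nat \<Rightarrow> real" where
  "alive s n = (\<Prod>i\<in>{1..n}. if s ! (i-1) then 1 else 0)"

(* z_j(rho) = max_{n=1..|rho|} a_n * I{rho(n)=j}; value 0 if |rho| = 0 *)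
definition zvar :: "nat list \<Rightarrow> nat \<Rightarrow> bool list \<Rightarrow> real" where
  "zvar rho j s = Max (insert 0 ((\<lambda>n. alive s n * (if rho ! n = j then 1 else 0)) ` {1..plen rho}))"

definition Ez :: "(nat \<times> nat \<Rightarrow> real) \<Rightarrow> nat list \<Rightarrow> nat \<Rightarrow> real" where
  "Ez w rho j = measure_pmf.expectation (surv_pmf w rho) (zvar rho j)"

definition visits :: "nat list \<Rightarrow> nat \<Rightarrow> bool" where
  "visits rho j \<longleftrightarrow> (\<exists>n\<in>{1..plen rho}. rho ! n = j)"

definition indic :: "nat list \<Rightarrow> nat \<Rightarrow> real" where
  "indic rho j = (if visits rho j then 1 else 0)"

definition feasible :: "(nat \<times> nat) set \<Rightarrow> (nat \<times> nat \<Rightarrow> real) \<Rightarrow> nat \<Rightarrow> nat \<Rightarrow> real \<Rightarrow> nat list set" where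
  "feasible E w vs vt ps = {rho. is_path E rho \<and> hd rho = vs \<and> last rho = vt \<and>
      measure_pmf.prob (surv_pmf w rho) {s. alive s (plen rho) = 1} \<ge> ps}"

definition zeta :: "(nat \<times> nat) set \<Rightarrow> (nat \<times> nat \<Rightarrow> real) \<Rightarrow> nat \<Rightarrow> nat \<Rightarrow> real \<Rightarrow> nat \<Rightarrow> real" where
  "zeta E w vs vt ps j = (SUP rho \<in> feasible E w vs vt ps. Ez w rho j)"

fun team_pmf :: "(nat \<times> nat \<Rightarrow> real) \<Rightarrow> nat list list \<Rightarrow> bool list list pmf" where
  "team_pmf w [] = return_pmf []"
| "team_pmf w (rho # rhos) = surv_pmf w rho \<bind> (\<lambda>s. team_pmf w rhos \<bind> (\<lambda>ss. return_pmf (s # ss)))"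

definition Jteam :: "nat \<Rightarrow> (nat \<Rightarrow> real) \<Rightarrow> (nat \<times> nat \<Rightarrow> real) \<Rightarrow> nat list list \<Rightarrow> real" where
  "Jteam V d w X = (\<Sum>j=1..V. d j * measure_pmf.expectation (team_pmf w X)
      (\<lambda>ss. 1 - (\<Prod>k<length X. 1 - zvar (X ! k) j (ss ! k))))"

end

theory Submission imports Defs begin

lemma integral_bind_pmf_bdd:
  fixes f :: "'b \<Rightarrow> real"
  assumes "\<And>x. \<bar>f x\<bar> \<le> B"
  shows "measure_pmf.expectation (bind_pmf M N) f = measure_pmf.expectation M (\<lambda>x. measure_pmf.expectation (N x) f)"
  unfolding measure_pmf_bind
  apply (rule integral_bind[where K="count_space UNIV" and B=B and B'=1])
  using assms measurable_measure_pmf[of N]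
  by (auto simp: measure_pmf.emeasure_space_1 intro: prob_space.finite_measure measure_pmf.prob_space_axioms)

lemma expect_bdd_le:
  fixes f :: "'b \<Rightarrow> real"
  assumes "\<And>x. f x \<le> B" "\<And>x. 0 \<le> f x"
  shows "measure_pmf.expectation M f \<le> B"
proof -
  have "measure_pmf.expectation M f \<le> measure_pmf.expectation M (\<lambda>_. B)"
    apply (rule integral_mono)
    apply (rule measure_pmf.integrable_const_bound[where B=B])
    using assms by (auto intro: order_trans)
  then show ?thesis by simp
qed

lemma alive_01: "alive s n = 0 \<or> alive s n = 1"
  unfolding alive_def by (induction n) auto

lemma alive_mono: "n \<le> m \<Longrightarrow> alive s m \<le> alive s n"
proof (induction m)
  case 0 then show ?case by simp
next
  case (Suc m)
  show ?case
  proof (cases "n = Suc m")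
    case False
    then have "alive s m \<le> alive s n" using Suc by simp
    moreover have "alive s (Suc m) = alive s m * (if s ! m then 1 else 0)"
      unfolding alive_def by (simp add: prod.nat_ivl_Suc')
    then have "alive s (Suc m) \<le> alive s m" using alive_01[of s m] by auto
    ultimately show ?thesis by linarith
  qed simp
qed

lemma zvar_01: "0 \<le> zvar rho j s \<and> zvar rho j s \<le> 1"
proof -
  let ?A = "insert 0 ((\<lambda>n. alive s n * (if rho ! n = j then 1 else 0)) ` {1..plen rho})"
  have fin: "finite ?A" by simp
  have "\<forall>x\<in>?A. x \<le> 1" using alive_01 by (auto, metis less_eq_real_def zero_less_one)
  then have "Max ?A \<le> 1" using fin by simp
  moreover have "0 \<le> Max ?A" using fin by (simp add: Max_ge_iff)
  ultimately show ?thesis unfolding zvar_def by simp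
qed

lemma Ez_01: "0 \<le> Ez w rho j \<and> Ez w rho j \<le> 1"
  unfolding Ez_def using zvar_01
  by (auto intro!: expect_bdd_le integral_nonneg_AE)

lemma zvar_novisit: "\<not> visits rho j \<Longrightarrow> zvar rho j s = 0"
  unfolding zvar_def visits_def
  by (cases "{Suc 0..plen rho} = {}") auto

lemma integrable_bdd01:
  fixes f :: "'b \<Rightarrow> real"
  assumes "\<And>x. \<bar>f x\<bar> \<le> B"
  shows "integrable (measure_pmf M) f"
  by (rule measure_pmf.integrable_const_bound[where B=B]) (use assms in auto)

lemma prod_bdd01:
  fixes f :: "nat \<Rightarrow> real"
  assumes "\<And>k. 0 \<le> f k \<and> f k \<le> 1"
  shows "\<bar>\<Prod>k<n. f k\<bar> \<le> 1"
  using assms by (simp add: prod_le_1 prod_nonneg)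

lemma E_one_minus_z: "measure_pmf.expectation (surv_pmf w rho) (\<lambda>s. 1 - zvar rho j s) = 1 - Ez w rho j"
proof -
  have "integrable (measure_pmf (surv_pmf w rho)) (zvar rho j)"
    by (rule integrable_bdd01[where B=1]) (use zvar_01 in \<open>auto simp: abs_le_iff\<close>)
  then show ?thesis unfolding Ez_def
    by (subst Bochner_Integration.integral_diff) auto
qed

lemma team_expect:
  "measure_pmf.expectation (team_pmf w X) (\<lambda>ss. \<Prod>k<length X. 1 - zvar (X!k) j (ss!k))
   = (\<Prod>k<length X. 1 - Ez w (X!k) j)"
proof (induction X)
  case Nil
  then show ?case by simp
next
  case (Cons rho X)
  let ?g = "\<lambda>ss. \<Prod>k<length X. 1 - zvar (X!k) j (ss!k)"
  have bd: "\<And>ss. \<bar>?g ss\<bar> \<le> 1"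
    by (rule prod_bdd01) (use zvar_01 in auto)
  have bd2: "\<And>ss. \<bar>(\<Prod>k<length (rho#X). 1 - zvar ((rho#X)!k) j (ss!k))\<bar> \<le> 1"
    by (rule prod_bdd01) (use zvar_01 in auto)
  have eq: "\<And>s ss. (\<Prod>k<length (rho#X). 1 - zvar ((rho#X)!k) j ((s#ss)!k)) = (1 - zvar rho j s) * ?g ss"
    unfolding length_Cons prod.lessThan_Suc_shift by simp
  have "measure_pmf.expectation (team_pmf w (rho#X)) (\<lambda>ss. \<Prod>k<length (rho#X). 1 - zvar ((rho#X)!k) j (ss!k))
     = measure_pmf.expectation (surv_pmf w rho) (\<lambda>s. measure_pmf.expectation (team_pmf w X)
          (\<lambda>ss. (1 - zvar rho j s) * ?g ss))"
    apply (simp only: team_pmf.simps)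
    apply (subst integral_bind_pmf_bdd[OF bd2])
    apply (subst integral_bind_pmf_bdd[OF bd2])
    apply (simp only: expectation_return_pmf eq)
    done
  also have "\<dots> = measure_pmf.expectation (surv_pmf w rho) (\<lambda>s. (1 - zvar rho j s) * (\<Prod>k<length X. 1 - Ez w (X!k) j))"
    using Cons.IH by simp
  also have "\<dots> = (1 - Ez w rho j) * (\<Prod>k<length X. 1 - Ez w (X!k) j)"
    by (simp add: E_one_minus_z)
  also have "\<dots> = (\<Prod>k<length (rho#X). 1 - Ez w ((rho#X)!k) j)"
    unfolding length_Cons prod.lessThan_Suc_shift by simp
  finally show ?case .
qed

lemma Jteam_formula:
  "Jteam V d w X = (\<Sum>j=1..V. d j * (1 - (\<Prod>k<length X. 1 - Ez w (X!k) j)))"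
proof -
  have "\<And>j. measure_pmf.expectation (team_pmf w X) (\<lambda>ss. 1 - (\<Prod>k<length X. 1 - zvar (X ! k) j (ss ! k)))
     = 1 - (\<Prod>k<length X. 1 - Ez w (X!k) j)"
  proof -
    fix j
    have "integrable (measure_pmf (team_pmf w X)) (\<lambda>ss. \<Prod>k<length X. 1 - zvar (X ! k) j (ss ! k))"
      by (rule integrable_bdd01[where B=1], rule prod_bdd01) (use zvar_01 in auto)
    then show "?thesis j"
      by (subst Bochner_Integration.integral_diff) (auto simp: team_expect)
  qed
  then show ?thesis unfolding Jteam_def by simp
qed


lemma Ez_lower:
  assumes "rho \<in> feasible E w vs vt ps"
  shows "ps * indic rho j \<le> Ez w rho j"
proof (cases "visits rho j")
  case False
  then show ?thesis using Ez_01[of w rho j] by (simp add: indic_def)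
next
  case True
  then obtain n where n: "n \<in> {1..plen rho}" "rho ! n = j" unfolding visits_def by blast
  let ?A = "{s. alive s (plen rho) = 1}"
  have le: "\<And>s. indicator ?A s \<le> zvar rho j s"
  proof -
    fix s
    have "alive s n \<in> insert 0 ((\<lambda>n. alive s n * (if rho ! n = j then 1 else 0)) ` {1..plen rho})"
      using n by force
    then have "alive s n \<le> zvar rho j s" unfolding zvar_def by (simp add: Max_ge)
    moreover have "alive s (plen rho) \<le> alive s n" using n by (simp add: alive_mono)
    ultimately show "indicator ?A s \<le> zvar rho j s"
      using zvar_01[of rho j s] by (auto simp: indicator_def)
  qed
  have "measure_pmf.prob (surv_pmf w rho) ?A = measure_pmf.expectation (surv_pmf w rho) (indicator ?A)"
    by simp
  also have "\<dots> \<le> Ez w rho j" unfolding Ez_def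
    apply (rule integral_mono)
      apply (rule integrable_bdd01[where B=1], simp add: indicator_def)
     apply (rule integrable_bdd01[where B=1]) using zvar_01 le apply (auto simp: abs_le_iff)
    done
  finally show ?thesis using assms True by (simp add: feasible_def indic_def)
qed

lemma zeta_bdd: "bdd_above ((\<lambda>rho. Ez w rho j) ` F)"
  using Ez_01 by (auto intro!: bdd_aboveI[where M=1])

lemma Ez_upper:
  assumes "rho \<in> feasible E w vs vt ps"
  shows "Ez w rho j \<le> zeta E w vs vt ps j * indic rho j"
proof (cases "visits rho j")
  case False
  then have "zvar rho j = (\<lambda>_. 0)" by (auto simp: zvar_novisit)
  then have "Ez w rho j = 0" unfolding Ez_def by simp
  then show ?thesis using False by (simp add: indic_def)
next
  case True
  then show ?thesis unfolding zeta_def indic_def using assms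
    by (simp add: cSUP_upper[OF _ zeta_bdd])
qed

lemma zeta_01:
  assumes "feasible E w vs vt ps \<noteq> {}"
  shows "0 \<le> zeta E w vs vt ps j \<and> zeta E w vs vt ps j \<le> 1"
proof
  obtain rho where r: "rho \<in> feasible E w vs vt ps" using assms by blast
  have "Ez w rho j \<le> zeta E w vs vt ps j" unfolding zeta_def using r by (rule cSUP_upper[OF _ zeta_bdd])
  then show "0 \<le> zeta E w vs vt ps j" using Ez_01[of w rho j] by linarith
  show "zeta E w vs vt ps j \<le> 1" unfolding zeta_def using assms Ez_01 by (simp add: cSUP_least)
qed

lemma union_bound:
  fixes p :: "nat \<Rightarrow> real"
  assumes "\<And>k. k < n \<Longrightarrow> 0 \<le> p k \<and> p k \<le> 1"
  shows "1 - (\<Prod>k<n. 1 - p k) \<le> (\<Sum>k<n. p k)"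
  using assms
proof (induction n)
  case 0 then show ?case by simp
next
  case (Suc n)
  have ih: "1 - (\<Prod>k<n. 1 - p k) \<le> (\<Sum>k<n. p k)" using Suc by simp
  have P: "0 \<le> (\<Prod>k<n. 1 - p k)" "(\<Prod>k<n. 1 - p k) \<le> 1"
    using Suc.prems by (auto intro!: prod_nonneg prod_le_1)
  have pn: "0 \<le> p n" "p n \<le> 1" using Suc.prems by auto
  have "1 - (\<Prod>k<Suc n. 1 - p k) = (1 - (\<Prod>k<n. 1 - p k)) + p n * (\<Prod>k<n. 1 - p k)"
    by (simp add: algebra_simps)
  also have "\<dots> \<le> (\<Sum>k<n. p k) + p n"
    using ih P pn by (smt (verit) mult_left_le)
  finally show ?case by simp
qed


lemma prod_shift1: "(\<Prod>i\<in>{1..m}. f i) = (\<Prod>k<m. f (Suc k :: nat) :: real)"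
  by (induction m) (auto simp: prod.lessThan_Suc atLeastAtMostSuc_conv)

theorem theorem2:
  fixes V K L :: nat and E :: "(nat \<times> nat) set" and w :: "nat \<times> nat \<Rightarrow> real"
    and vs vt :: nat and ps lam :: real and d :: "nat \<Rightarrow> real"
    and orient :: "(nat \<Rightarrow> real) \<Rightarrow> nat list"
    and rhat :: "nat \<Rightarrow> nat list" and Xopt :: "nat list list"
  assumes graph: "simple_graph V E"
    and w_sym: "\<forall>a b. (a,b) \<in> E \<longrightarrow> w (a,b) = w (b,a)"
    and w_range: "\<forall>e\<in>E. 0 < w e \<and> w e \<le> 1"
    and vs: "vs \<in> {1..V}" and vt: "vt \<in> {1..V}"
    and ps: "0 < ps" "ps \<le> 1"
    and nonempty: "feasible E w vs vt ps \<noteq> {}"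
    and d_pos: "\<forall>j\<in>{1..V}. d j > 0"
    and lam: "lam \<ge> 1"
    and orient: "\<forall>\<nu>. (\<forall>j\<in>{1..V}. \<nu> j \<ge> 0) \<longrightarrow>
        orient \<nu> \<in> feasible E w vs vt ps \<and>
        (\<forall>rho\<in>feasible E w vs vt ps.
           (\<Sum>j=1..V. indic (orient \<nu>) j * \<nu> j) \<ge> (1/lam) * (\<Sum>j=1..V. indic rho j * \<nu> j))"
    and greedy: "\<forall>l\<ge>1. rhat l = orient (\<lambda>j. zeta E w vs vt ps j * d j *
        (\<Prod>i\<in>{1..l-1}. 1 - Ez w (rhat i) j))"
    and K: "K \<ge> 1"
    and opt_len: "length Xopt = K"
    and opt_feas: "set Xopt \<subseteq> feasible E w vs vt ps"
    and opt: "\<forall>Y. length Y = K \<and> set Y \<subseteq> feasible E w vs vt ps \<longrightarrow> Jteam V d w Y \<le> Jteam V d w Xopt"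
    and L: "L \<ge> K"
  shows "Jteam V d w (map rhat [1..<L+1]) \<ge> (1 - exp (- (ps * real L) / (lam * real K))) * Jteam V d w Xopt"
  proof -
  define Z where "Z j = zeta E w vs vt ps j" for j
  define q where "q i j = Ez w (rhat i) j" for i j
  define A where "A m j = (\<Prod>i\<in>{1..m}. 1 - q i j)" for m j
  define p where "p k j = Ez w (Xopt ! k) j" for k j
  define P where "P j = (\<Prod>k<K. 1 - p k j)" for j
  define F where "F m = (\<Sum>j=1..V. d j * (1 - A m j))" for m
  define OPT where "OPT = (\<Sum>j=1..V. d j * (1 - P j))"
  define c where "c = ps / (lam * real K)"
  have Z01: "\<And>j. 0 \<le> Z j \<and> Z j \<le> 1" unfolding Z_def using zeta_01[OF nonempty] by blast
  have q01: "\<And>i j. 0 \<le> q i j \<and> q i j \<le> 1" unfolding q_def using Ez_01 by blast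
  have p01: "\<And>k j. 0 \<le> p k j \<and> p k j \<le> 1" unfolding p_def using Ez_01 by blast
  have A01: "\<And>m j. 0 \<le> A m j \<and> A m j \<le> 1" unfolding A_def using q01
    by (auto intro!: prod_nonneg prod_le_1)
  have P01: "\<And>j. 0 \<le> P j \<and> P j \<le> 1" unfolding P_def using p01
    by (auto intro!: prod_nonneg prod_le_1)
  have AS: "\<And>m j. A (Suc m) j = A m j * (1 - q (Suc m) j)"
    unfolding A_def by (simp add: atLeastAtMostSuc_conv mult.commute)
  have FJ: "\<And>m. Jteam V d w (map rhat [1..<m+1]) = F m"
  proof -
    fix m
    have "\<And>j. (\<Prod>k<length (map rhat [1..<m+1]). 1 - Ez w (map rhat [1..<m+1] ! k) j) = A m j"
      unfolding A_def prod_shift1 q_def by (intro prod.cong) (auto simp del: upt_Suc simp: nth_map_upt)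
    then show "Jteam V d w (map rhat [1..<m+1]) = F m" unfolding F_def Jteam_formula by simp
  qed
  have OJ: "Jteam V d w Xopt = OPT" unfolding OPT_def Jteam_formula P_def p_def opt_len by simp
  have c01: "0 \<le> c" "c \<le> 1"
  proof -
    have "1 \<le> real K" using K by simp
    then have "1 \<le> lam * real K" using lam by (metis mult_mono' mult_1_right zero_le_one order_trans)
    then show "0 \<le> c" "c \<le> 1" unfolding c_def using ps by (auto simp: divide_le_eq)
  qed
  have step: "c * (OPT - F m) \<le> F (Suc m) - F m" for m
  proof -
    define \<nu> where "\<nu> j = Z j * d j * A m j" for j
    have dA: "\<And>j. j \<in> {1..V} \<Longrightarrow> 0 \<le> d j * A m j" using d_pos A01 by (simp add: less_imp_le)
    have nu0: "\<forall>j\<in>{1..V}. \<nu> j \<ge> 0" unfolding \<nu>_def using Z01 dA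
      by (metis mult.assoc mult_nonneg_nonneg)
    have rh: "rhat (Suc m) = orient \<nu>"
      using greedy unfolding \<nu>_def Z_def A_def q_def by simp
    have orf: "rhat (Suc m) \<in> feasible E w vs vt ps"
      and orb: "\<And>rho. rho \<in> feasible E w vs vt ps \<Longrightarrow>
        (\<Sum>j=1..V. indic (rhat (Suc m)) j * \<nu> j) \<ge> (1/lam) * (\<Sum>j=1..V. indic rho j * \<nu> j)"
      using orient nu0 rh by auto
    define gain where "gain = (\<Sum>j=1..V. d j * A m j * q (Suc m) j)"
    have g: "F (Suc m) - F m = gain"
      unfolding F_def gain_def AS by (simp add: sum_subtractf[symmetric] algebra_simps)
    have G1: "ps * (\<Sum>j=1..V. indic (rhat (Suc m)) j * \<nu> j) \<le> gain"
      unfolding gain_def sum_distrib_left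
    proof (rule sum_mono)
      fix j assume j: "j \<in> {1..V}"
      have i0: "0 \<le> indic (rhat (Suc m)) j" by (simp add: indic_def)
      have "ps * (indic (rhat (Suc m)) j * \<nu> j) = (d j * A m j) * (Z j * (ps * indic (rhat (Suc m)) j))"
        unfolding \<nu>_def by (simp add: algebra_simps)
      also have "\<dots> \<le> (d j * A m j) * (ps * indic (rhat (Suc m)) j)"
        using dA[OF j] Z01[of j] i0 ps by (intro mult_left_mono) (auto simp: mult_left_le_one_le)
      also have "\<dots> \<le> (d j * A m j) * q (Suc m) j"
        using dA[OF j] Ez_lower[OF orf] unfolding q_def by (intro mult_left_mono) auto
      finally show "ps * (indic (rhat (Suc m)) j * \<nu> j) \<le> d j * A m j * q (Suc m) j" .
    qed
    have G2: "(1/lam) * (\<Sum>j=1..V. d j * A m j * p k j) \<le> (\<Sum>j=1..V. indic (rhat (Suc m)) j * \<nu> j)"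
      if k: "k < K" for k
    proof -
      have kf: "Xopt ! k \<in> feasible E w vs vt ps" using opt_feas opt_len k by auto
      have "(\<Sum>j=1..V. d j * A m j * p k j) \<le> (\<Sum>j=1..V. indic (Xopt ! k) j * \<nu> j)"
      proof (rule sum_mono)
        fix j assume j: "j \<in> {1..V}"
        have "d j * A m j * p k j \<le> d j * A m j * (Z j * indic (Xopt ! k) j)"
          using dA[OF j] Ez_upper[OF kf] unfolding p_def Z_def by (intro mult_left_mono) auto
        then show "d j * A m j * p k j \<le> indic (Xopt ! k) j * \<nu> j"
          unfolding \<nu>_def by (simp add: algebra_simps)
      qed
      then have "(1/lam) * (\<Sum>j=1..V. d j * A m j * p k j) \<le> (1/lam) * (\<Sum>j=1..V. indic (Xopt ! k) j * \<nu> j)"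
        using lam by (intro mult_left_mono) auto
      also have "\<dots> \<le> (\<Sum>j=1..V. indic (rhat (Suc m)) j * \<nu> j)" using orb[OF kf] by simp
      finally show ?thesis .
    qed
    have "OPT - F m = (\<Sum>j=1..V. d j * (A m j - P j))"
      unfolding OPT_def F_def by (simp add: sum_subtractf[symmetric] algebra_simps)
    also have "\<dots> \<le> (\<Sum>j=1..V. d j * A m j * (\<Sum>k<K. p k j))"
    proof (rule sum_mono)
      fix j assume j: "j \<in> {1..V}"
      have "P j * A m j \<le> P j" using A01[of m j] P01[of j] by (simp add: mult_left_le)
      then have "A m j - P j \<le> A m j * (1 - P j)"
        by (simp add: algebra_simps)
      also have "\<dots> \<le> A m j * (\<Sum>k<K. p k j)"
        using union_bound[of K "\<lambda>k. p k j"] p01 A01[of m j] unfolding P_def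
        by (intro mult_left_mono) auto
      finally show "d j * (A m j - P j) \<le> d j * A m j * (\<Sum>k<K. p k j)"
        using d_pos j by (simp add: mult.assoc)
    qed
    also have "\<dots> = (\<Sum>k<K. (\<Sum>j=1..V. d j * A m j * p k j))"
      unfolding sum_distrib_left by (rule sum.swap)
    also have "\<dots> \<le> (\<Sum>k<K. lam * (ps * (\<Sum>j=1..V. indic (rhat (Suc m)) j * \<nu> j)) / ps)"
    proof (rule sum_mono)
      fix k assume "k \<in> {..<K}"
      then have "(1/lam) * (\<Sum>j=1..V. d j * A m j * p k j) \<le> (\<Sum>j=1..V. indic (rhat (Suc m)) j * \<nu> j)"
        using G2 by auto
      then show "(\<Sum>j=1..V. d j * A m j * p k j) \<le> lam * (ps * (\<Sum>j=1..V. indic (rhat (Suc m)) j * \<nu> j)) / ps"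
        using lam ps by (simp add: field_simps)
    qed
    also have "\<dots> \<le> (\<Sum>k<K. lam * gain / ps)"
      using G1 lam ps by (intro sum_mono divide_right_mono mult_left_mono) auto
    also have "\<dots> = real K * lam * gain / ps" by simp
    finally have "OPT - F m \<le> real K * lam * gain / ps" .
    then have "c * (OPT - F m) \<le> c * (real K * lam * gain / ps)" using c01 by (intro mult_left_mono) auto
    also have "\<dots> = gain" unfolding c_def using K lam ps by (simp add: field_simps)
    finally show ?thesis using g by simp
  qed
  have F0: "F 0 = 0" unfolding F_def A_def by simp
  have OPT0: "0 \<le> OPT" unfolding OPT_def using d_pos P01
    by (intro sum_nonneg mult_nonneg_nonneg) (auto simp: less_imp_le)
  have dec: "OPT - F m \<le> (1 - c) ^ m * OPT" for m
  proof (induction m)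
    case 0 then show ?case using F0 by simp
  next
    case (Suc m)
    have "OPT - F (Suc m) \<le> (1 - c) * (OPT - F m)" using step[of m] by (simp add: algebra_simps)
    also have "\<dots> \<le> (1 - c) * ((1 - c) ^ m * OPT)" using Suc c01 by (intro mult_left_mono) auto
    finally show ?case by simp
  qed
  have "(1 - c) ^ L \<le> exp (- c) ^ L"
    using c01 by (intro power_mono) (auto simp: exp_ge_add_one_self[of "-c", simplified])
  also have "\<dots> = exp (- (ps * real L) / (lam * real K))"
    unfolding c_def by (simp add: exp_of_nat_mult[symmetric] field_simps)
  finally have e: "(1 - c) ^ L \<le> exp (- (ps * real L) / (lam * real K))" .
  have "(1 - exp (- (ps * real L) / (lam * real K))) * OPT \<le> (1 - (1 - c) ^ L) * OPT"
    using e OPT0 by (intro mult_right_mono) auto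
  also have "\<dots> \<le> F L" using dec[of L] by (simp add: algebra_simps)
  finally show ?thesis using FJ[of L] OJ by simp
qed

end
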